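(* Let $\sigma:\mathbb R\to\mathbb C$ be smooth except at finitely many points where it has bounded jumps, with $\sigma(t)\to0$ as $t\to-\infty$ and $\sigma(t)\to1$ as $t\to+\infty$ exponentially fast, and let $K$ have kernel $K(x,y)=\int_{-\infty}^\infty\sigma(t)\mathrm{Ai}(x+t)\mathrm{Ai}(y+t)\,dt$. Then for every $s\in\mathbb R$, $$\det(I-K)_{L^2(s,\infty)}=\det(I-\hat K_s)_{L^2(-\infty,\infty)},\qquad\hat K_s(x,y)=\sqrt{\sigma(x-s)}\,K_{\mathrm{Ai}}(x,y)\,\sqrt{\sigma(y-s)},$$ where $\sqrt{\sigma}$ denotes a fixed square root of $\sigma$.
   Context: $\mathrm{Ai}$ is the Airy function and $K_{\mathrm{Ai}}(x,y)=\int_0^\infty\mathrm{Ai}(x+t)\mathrm{Ai}(y+t)\,dt$ is the Airy kernel. *)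

theory Defs
  imports "HOL-Analysis.Analysis"
begin

text \<open>Airy function: Ai(x) = (1/pi) * lim_{R->oo} int_0^R cos(t^3/3 + x t) dt
  (the defining integral is only conditionally convergent, hence the limit).\<close>
definition Ai :: "real \<Rightarrow> real" where
  "Ai x = (1 / pi) * lim (\<lambda>R::nat. integral {0..real R} (\<lambda>t. cos (t ^ 3 / 3 + x * t)))"

definition airy_kernel :: "real \<Rightarrow> real \<Rightarrow> real" where
  "airy_kernel x y = (LINT t | restrict_space lborel {0..}. Ai (x + t) * Ai (y + t))"

definition kernel_det :: "nat \<Rightarrow> (real \<Rightarrow> real \<Rightarrow> complex) \<Rightarrow> (nat \<Rightarrow> real) \<Rightarrow> complex" where
  "kernel_det n k x = (\<Sum>p | p permutes {..<n}. of_int (sign p) * (\<Prod>i<n. k (x i) (x (p i))))"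

text \<open>Fredholm determinant det(I - K) on L^2(A) of the integral operator with kernel k,
  given by the Fredholm series
  sum_n (-1)^n/n! int_{A^n} det[k(x_i,x_j)] dx_1 ... dx_n.\<close>
definition fredholm_det :: "real set \<Rightarrow> (real \<Rightarrow> real \<Rightarrow> complex) \<Rightarrow> complex" where
  "fredholm_det A k = (\<Sum>n. ((-1) ^ n / of_nat (fact n)) *
      integral\<^sup>L (PiM {..<n} (\<lambda>_. restrict_space lborel A)) (kernel_det n k))"

definition smooth_off :: "real set \<Rightarrow> (real \<Rightarrow> complex) \<Rightarrow> bool" where
  "smooth_off S f \<longleftrightarrow> (\<exists>D :: nat \<Rightarrow> real \<Rightarrow> complex. D 0 = f \<and>
      (\<forall>k. \<forall>x. x \<notin> S \<longrightarrow> (D k has_vector_derivative D (Suc k) x) (at x)))"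

definition admissible_sigma :: "(real \<Rightarrow> complex) \<Rightarrow> bool" where
  "admissible_sigma \<sigma> \<longleftrightarrow>
     (\<exists>S. finite S \<and> smooth_off S \<sigma> \<and>
        (\<forall>p\<in>S. (\<exists>L. (\<sigma> \<longlongrightarrow> L) (at_left p)) \<and> (\<exists>R. (\<sigma> \<longlongrightarrow> R) (at_right p)))) \<and>
     (\<exists>C c. c > 0 \<and> (\<forall>t\<le>0. norm (\<sigma> t) \<le> C * exp (c * t)) \<and>
                     (\<forall>t\<ge>0. norm (\<sigma> t - 1) \<le> C * exp (- c * t)))"

end

theory Submission
  imports Defs "HOL-Probability.Sinc_Integral"
begin

lemma kernel_det_scale:
  "kernel_det n (\<lambda>x y. u x * k x y * v y) z = (\<Prod>i<n. u (z i) * v (z i)) * kernel_det n k z"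
  unfolding kernel_det_def sum_distrib_left
proof (rule sum.cong[OF refl])
  fix p assume "p \<in> {p. p permutes {..<n}}"
  hence p: "p permutes {..<n}" by simp
  have "(\<Prod>i<n. v (z (p i))) = (\<Prod>i<n. v (z i))"
    using prod.permute[OF p, of "\<lambda>i. v (z i)"] by (simp add: comp_def)
  thus "of_int (sign p) * (\<Prod>i<n. u (z i) * k (z i) (z (p i)) * v (z (p i))) =
    (\<Prod>i<n. u (z i) * v (z i)) * (of_int (sign p) * (\<Prod>i<n. k (z i) (z (p i))))"
    by (simp add: prod.distrib mult_ac)
qed

lemma integrable_pair_mult:
  fixes f g :: "'a \<Rightarrow> real"
  assumes "sigma_finite_measure M1" "sigma_finite_measure M2"
    and f: "integrable M1 f" and g: "integrable M2 g"
  shows "integrable (M1 \<Otimes>\<^sub>M M2) (\<lambda>z. f (fst z) * g (snd z))"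
proof -
  interpret pair_sigma_finite M1 M2 using assms(1,2) by (simp add: pair_sigma_finite.intro)
  have [measurable]: "f \<in> borel_measurable M1" "g \<in> borel_measurable M2" using f g by auto
  have "(\<integral>\<^sup>+ z. ennreal (norm (f (fst z) * g (snd z))) \<partial>(M1 \<Otimes>\<^sub>M M2))
      = (\<integral>\<^sup>+ x. \<integral>\<^sup>+ y. ennreal (norm (f x)) * ennreal (norm (g y)) \<partial>M2 \<partial>M1)"
  proof -
    have "(\<integral>\<^sup>+ z. ennreal (norm (f (fst z) * g (snd z))) \<partial>(M1 \<Otimes>\<^sub>M M2))
      = (\<integral>\<^sup>+ z. ennreal (norm (f (fst z))) * ennreal (norm (g (snd z))) \<partial>(M1 \<Otimes>\<^sub>M M2))"
      by (simp add: abs_mult ennreal_mult)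
    also have "\<dots> = (\<integral>\<^sup>+ x. \<integral>\<^sup>+ y. ennreal (norm (f x)) * ennreal (norm (g y)) \<partial>M2 \<partial>M1)"
      using M2.nn_integral_fst[where f="\<lambda>z. ennreal (norm (f (fst z))) * ennreal (norm (g (snd z)))"]
      by simp
    finally show ?thesis .
  qed
  also have "\<dots> = (\<integral>\<^sup>+ x. ennreal (norm (f x)) \<partial>M1) * (\<integral>\<^sup>+ y. ennreal (norm (g y)) \<partial>M2)"
    by (simp add: nn_integral_cmult nn_integral_multc)
  also have "\<dots> < \<infinity>" using f g
    by (simp add: integrable_iff_bounded ennreal_mult_less_top)
  finally show ?thesis by (simp add: integrable_iff_bounded)
qed

lemma kernel_det_fun:
  "kernel_det n k = (\<lambda>x. \<Sum>p\<in>{p. p permutes {..<n}}. of_int (sign p) * (\<Prod>i<n. k (x i) (x (p i))))"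
  by (rule ext) (simp add: kernel_det_def)

lemma fred_swap:
  fixes MX MT :: "real measure" and a b :: "real \<Rightarrow> real \<Rightarrow> complex" and p q :: "real \<Rightarrow> real"
  assumes sfX: "sigma_finite_measure MX" and sfT: "sigma_finite_measure MT"
    and ma[measurable]: "(\<lambda>z. a (fst z) (snd z)) \<in> borel_measurable (MX \<Otimes>\<^sub>M MT)"
    and mb[measurable]: "(\<lambda>z. b (fst z) (snd z)) \<in> borel_measurable (MX \<Otimes>\<^sub>M MT)"
    and ba: "\<And>x t. x \<in> space MX \<Longrightarrow> t \<in> space MT \<Longrightarrow> norm (a x t) \<le> p x * q t"
    and bb: "\<And>x t. x \<in> space MX \<Longrightarrow> t \<in> space MT \<Longrightarrow> norm (b x t) \<le> p x * q t"
    and ip: "integrable MX (\<lambda>x. (p x)^2)" and iq: "integrable MT (\<lambda>t. (q t)^2)"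
  shows "integral\<^sup>L (PiM {..<n} (\<lambda>_. MX)) (kernel_det n (\<lambda>x y. \<integral>t. a x t * b y t \<partial>MT))
       = integral\<^sup>L (PiM {..<n} (\<lambda>_. MT)) (kernel_det n (\<lambda>t t'. \<integral>x. b x t * a x t' \<partial>MX))"
proof -
  interpret X: product_sigma_finite "\<lambda>_::nat. MX" by (simp add: product_sigma_finite_def sfX)
  interpret T: product_sigma_finite "\<lambda>_::nat. MT" by (simp add: product_sigma_finite_def sfT)
  define PX where "PX = PiM {..<n} (\<lambda>_. MX)"
  define PT where "PT = PiM {..<n} (\<lambda>_. MT)"
  have sPX: "sigma_finite_measure PX" unfolding PX_def by (rule X.sigma_finite) simp
  have sPT: "sigma_finite_measure PT" unfolding PT_def by (rule T.sigma_finite) simp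
  interpret P: pair_sigma_finite PX PT using sPX sPT by (simp add: pair_sigma_finite.intro)
  interpret Q: pair_sigma_finite PT PX using sPX sPT by (simp add: pair_sigma_finite.intro)
  define K1 where "K1 = (\<lambda>x y. \<integral>t. a x t * b y t \<partial>MT)"
  define K2 where "K2 = (\<lambda>t t'. \<integral>x. b x t * a x t' \<partial>MX)"
  have pq_nn: "0 \<le> p x * q t" if "x \<in> space MX" "t \<in> space MT" for x t
    using ba[OF that] norm_ge_zero order_trans by blast
  have ma_t: "(\<lambda>t. a x t) \<in> borel_measurable MT" if "x \<in> space MX" for x
    using measurable_compose[OF measurable_Pair1'[OF that] ma] by simp
  have mb_t: "(\<lambda>t. b x t) \<in> borel_measurable MT" if "x \<in> space MX" for x
    using measurable_compose[OF measurable_Pair1'[OF that] mb] by simp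
  have ma_x: "(\<lambda>x. a x t) \<in> borel_measurable MX" if "t \<in> space MT" for t
    using measurable_compose[OF measurable_Pair2'[OF that] ma] by simp
  have mb_x: "(\<lambda>x. b x t) \<in> borel_measurable MX" if "t \<in> space MT" for t
    using measurable_compose[OF measurable_Pair2'[OF that] mb] by simp
  have iq2: "integrable MT (\<lambda>t. p x * p y * (q t)^2)" for x y
    using iq by simp
  have ip2: "integrable MX (\<lambda>x. q t * q t' * (p x)^2)" for t t'
    using ip by simp
  have int1: "integrable MT (\<lambda>t. a x t * b y t)" if "x \<in> space MX" "y \<in> space MX" for x y
  proof (rule Bochner_Integration.integrable_bound[OF iq2[of x y]])
    show "(\<lambda>t. a x t * b y t) \<in> borel_measurable MT" using ma_t[OF that(1)] mb_t[OF that(2)] by simp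
    show "AE t in MT. norm (a x t * b y t) \<le> norm (p x * p y * (q t)^2)"
    proof (rule AE_I2)
      fix t assume t: "t \<in> space MT"
      have "norm (a x t * b y t) \<le> (p x * q t) * (p y * q t)"
        unfolding norm_mult by (rule mult_mono) (use ba[OF that(1) t] bb[OF that(2) t] pq_nn[OF that(1) t] in auto)
      also have "\<dots> \<le> norm (p x * p y * (q t)^2)" by (simp add: power2_eq_square mult_ac)
      finally show "norm (a x t * b y t) \<le> norm (p x * p y * (q t)^2)" .
    qed
  qed
  have int2: "integrable MX (\<lambda>x. b x t * a x t')" if "t \<in> space MT" "t' \<in> space MT" for t t'
  proof (rule Bochner_Integration.integrable_bound[OF ip2[of t t']])
    show "(\<lambda>x. b x t * a x t') \<in> borel_measurable MX" using ma_x[OF that(2)] mb_x[OF that(1)] by simp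
    show "AE x in MX. norm (b x t * a x t') \<le> norm (q t * q t' * (p x)^2)"
    proof (rule AE_I2)
      fix x assume x: "x \<in> space MX"
      have "norm (b x t * a x t') \<le> (p x * q t) * (p x * q t')"
        unfolding norm_mult by (rule mult_mono) (use ba[OF x that(2)] bb[OF x that(1)] pq_nn[OF x that(1)] in auto)
      also have "\<dots> \<le> norm (q t * q t' * (p x)^2)" by (simp add: power2_eq_square mult_ac)
      finally show "norm (b x t * a x t') \<le> norm (q t * q t' * (p x)^2)" .
    qed
  qed
  have mcomp: "(\<lambda>z. (fst z i, snd z j)) \<in> measurable (PX \<Otimes>\<^sub>M PT) (MX \<Otimes>\<^sub>M MT)" if "i < n" "j < n" for i j
    unfolding PX_def PT_def
    by (rule measurable_Pair; rule measurable_compose[OF _ measurable_component_singleton])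
       (use that in auto)
  have spX: "fst z i \<in> space MX" if "z \<in> space (PX \<Otimes>\<^sub>M PT)" "i < n" for z i
    using that by (auto simp: space_pair_measure PX_def space_PiM PiE_def Pi_def)
  have spT: "snd z i \<in> space MT" if "z \<in> space (PX \<Otimes>\<^sub>M PT)" "i < n" for z i
    using that by (auto simp: space_pair_measure PT_def space_PiM PiE_def Pi_def)
  have per: "integrable PX (\<lambda>x. \<Prod>i<n. K1 (x i) (x (\<pi> i))) \<and> integrable PT (\<lambda>t. \<Prod>i<n. K2 (t i) (t (\<pi> i)))
     \<and> integral\<^sup>L PX (\<lambda>x. \<Prod>i<n. K1 (x i) (x (\<pi> i))) = integral\<^sup>L PT (\<lambda>t. \<Prod>i<n. K2 (t i) (t (\<pi> i)))"
    if \<pi>: "\<pi> permutes {..<n}" for \<pi>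
  proof -
    have \<pi>n: "\<pi> i < n" if "i < n" for i using permutes_in_image[OF \<pi>] that by simp
    have i\<pi>n: "inv \<pi> i < n" if "i < n" for i using permutes_in_image[OF permutes_inv[OF \<pi>]] that by simp
    define H where "H = (\<lambda>x t. \<Prod>i<n. a (x i) (t i) * b (x (\<pi> i)) (t i))"
    have Hint: "integrable (PX \<Otimes>\<^sub>M PT) (\<lambda>(x,t). H x t)"
    proof (rule Bochner_Integration.integrable_bound)
      show "integrable (PX \<Otimes>\<^sub>M PT) (\<lambda>z. (\<Prod>i<n. (p (fst z i))^2) * (\<Prod>i<n. (q (snd z i))^2))"
        by (rule integrable_pair_mult[OF sPX sPT]) (auto simp: PX_def PT_def intro!: X.product_integrable_prod T.product_integrable_prod ip iq)
      show "(\<lambda>(x,t). H x t) \<in> borel_measurable (PX \<Otimes>\<^sub>M PT)"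
        unfolding H_def split_beta'
        by (intro borel_measurable_prod borel_measurable_times
              measurable_compose[OF mcomp ma, simplified] measurable_compose[OF mcomp mb, simplified])
           (auto simp: \<pi>n)
      show "AE z in PX \<Otimes>\<^sub>M PT. norm ((\<lambda>(x,t). H x t) z) \<le> norm ((\<Prod>i<n. (p (fst z i))^2) * (\<Prod>i<n. (q (snd z i))^2))"
      proof (rule AE_I2)
        fix z assume z: "z \<in> space (PX \<Otimes>\<^sub>M PT)"
        have "norm ((\<lambda>(x,t). H x t) z) = (\<Prod>i<n. norm (a (fst z i) (snd z i)) * norm (b (fst z (\<pi> i)) (snd z i)))"
          by (simp add: H_def split_beta prod_norm[symmetric] norm_mult)
        also have "\<dots> \<le> (\<Prod>i<n. (p (fst z i) * q (snd z i)) * (p (fst z (\<pi> i)) * q (snd z i)))"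
          by (rule prod_mono) (auto intro!: mult_mono ba bb spX[OF z] spT[OF z] pq_nn \<pi>n)
        also have "\<dots> = (\<Prod>i<n. p (fst z i)) * (\<Prod>i<n. p (fst z (\<pi> i))) * (\<Prod>i<n. (q (snd z i))^2)"
          by (simp add: prod.distrib power2_eq_square mult_ac)
        also have "(\<Prod>i<n. p (fst z (\<pi> i))) = (\<Prod>i<n. p (fst z i))"
          using prod.permute[OF \<pi>, of "\<lambda>i. p (fst z i)"] by (simp add: comp_def)
        also have "(\<Prod>i<n. p (fst z i)) * (\<Prod>i<n. p (fst z i)) * (\<Prod>i<n. (q (snd z i))^2)
           \<le> norm ((\<Prod>i<n. (p (fst z i))^2) * (\<Prod>i<n. (q (snd z i))^2))"
          by (simp add: power2_eq_square prod.distrib)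
        finally show "norm ((\<lambda>(x,t). H x t) z) \<le> norm ((\<Prod>i<n. (p (fst z i))^2) * (\<Prod>i<n. (q (snd z i))^2))" .
      qed
    qed
    have c2: "(\<integral>t. H x t \<partial>PT) = (\<Prod>i<n. K1 (x i) (x (\<pi> i)))" if x: "x \<in> space PX" for x
    proof -
      have xs: "x i \<in> space MX" if "i < n" for i using x that by (auto simp: PX_def space_PiM)
      show ?thesis unfolding H_def K1_def PT_def
        by (rule T.product_integral_prod[where f="\<lambda>i t. a (x i) t * b (x (\<pi> i)) t"]) (auto intro!: int1 xs \<pi>n)
    qed
    have c3: "(\<integral>x. H x t \<partial>PX) = (\<Prod>i<n. K2 (t i) (t (\<pi> i)))" if t: "t \<in> space PT" for t
    proof -
      have ts: "t i \<in> space MT" if "i < n" for i using t that by (auto simp: PT_def space_PiM)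
      have "H x t = (\<Prod>j<n. b (x j) (t (inv \<pi> j)) * a (x j) (t j))" for x
      proof -
        have "(\<Prod>i<n. b (x (\<pi> i)) (t i)) = (\<Prod>j<n. b (x j) (t (inv \<pi> j)))"
          using prod.permute[OF permutes_inv[OF \<pi>], of "\<lambda>i. b (x (\<pi> i)) (t i)"]
          by (simp add: comp_def permutes_inverses[OF \<pi>])
        thus ?thesis unfolding H_def by (simp add: prod.distrib mult_ac)
      qed
      hence "(\<integral>x. H x t \<partial>PX) = (\<integral>x. (\<Prod>j<n. b (x j) (t (inv \<pi> j)) * a (x j) (t j)) \<partial>PX)" by simp
      also have "\<dots> = (\<Prod>j<n. K2 (t (inv \<pi> j)) (t j))" unfolding K2_def PX_def
        by (rule X.product_integral_prod[where f="\<lambda>j x. b x (t (inv \<pi> j)) * a x (t j)"]) (auto intro!: int2 ts i\<pi>n)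
      also have "\<dots> = (\<Prod>i<n. K2 (t i) (t (\<pi> i)))"
        using prod.permute[OF \<pi>, of "\<lambda>j. K2 (t (inv \<pi> j)) (t j)"]
        by (simp add: comp_def permutes_inverses[OF \<pi>])
      finally show ?thesis .
    qed
    have i1: "integrable PX (\<lambda>x. \<Prod>i<n. K1 (x i) (x (\<pi> i)))"
    proof -
      have "integrable PX (\<lambda>x. \<integral>t. H x t \<partial>PT)" using P.integrable_fst'[OF Hint] by simp
      thus ?thesis using Bochner_Integration.integrable_cong[OF refl, of PX "\<lambda>x. \<integral>t. H x t \<partial>PT" "\<lambda>x. \<Prod>i<n. K1 (x i) (x (\<pi> i))"] c2 by simp
    qed
    have Hint': "integrable (PT \<Otimes>\<^sub>M PX) (\<lambda>(t,x). H x t)"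
      using Hint P.integrable_product_swap_iff[of "\<lambda>(x,t). H x t"] by (simp add: case_prod_beta)
    have i2: "integrable PT (\<lambda>t. \<Prod>i<n. K2 (t i) (t (\<pi> i)))"
    proof -
      have "integrable PT (\<lambda>t. \<integral>x. H x t \<partial>PX)" using Q.integrable_fst'[OF Hint'] by simp
      thus ?thesis using Bochner_Integration.integrable_cong[OF refl, of PT "\<lambda>t. \<integral>x. H x t \<partial>PX" "\<lambda>t. \<Prod>i<n. K2 (t i) (t (\<pi> i))"] c3 by simp
    qed
    have "integral\<^sup>L PX (\<lambda>x. \<Prod>i<n. K1 (x i) (x (\<pi> i))) = (\<integral>x. \<integral>t. H x t \<partial>PT \<partial>PX)"
      by (rule Bochner_Integration.integral_cong) (simp_all add: c2)
    also have "\<dots> = (\<integral>t. \<integral>x. H x t \<partial>PX \<partial>PT)"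
      by (rule P.Fubini_integral[symmetric]) (use Hint in simp)
    also have "\<dots> = integral\<^sup>L PT (\<lambda>t. \<Prod>i<n. K2 (t i) (t (\<pi> i)))"
      by (rule Bochner_Integration.integral_cong) (simp_all add: c3)
    finally show ?thesis using i1 i2 by simp
  qed
  have "integral\<^sup>L PX (kernel_det n K1) =
     (\<Sum>\<pi>\<in>{p. p permutes {..<n}}. of_int (sign \<pi>) * integral\<^sup>L PX (\<lambda>x. \<Prod>i<n. K1 (x i) (x (\<pi> i))))"
    unfolding kernel_det_fun using per
    by (subst Bochner_Integration.integral_sum) auto
  also have "\<dots> = (\<Sum>\<pi>\<in>{p. p permutes {..<n}}. of_int (sign \<pi>) * integral\<^sup>L PT (\<lambda>t. \<Prod>i<n. K2 (t i) (t (\<pi> i))))"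
    using per by simp
  also have "\<dots> = integral\<^sup>L PT (kernel_det n K2)"
    unfolding kernel_det_fun using per
    by (subst Bochner_Integration.integral_sum) auto
  finally show ?thesis unfolding PX_def PT_def K1_def K2_def .
qed

lemma aux: fixes C S t x :: real assumes "t\<^sup>2 + x \<noteq> 0"
  shows "((C * (3 * t^2 / 3 + x)) * (t\<^sup>2+x) - S * (2 * t)) / (t\<^sup>2+x)\<^sup>2 = C - S * (2*t/(t\<^sup>2+x)\<^sup>2)"
proof -
  define d where "d = t\<^sup>2 + x"
  have d: "d \<noteq> 0" using assms by (simp add: d_def)
  have "3 * t^2 / 3 + x = d" by (simp add: d_def)
  hence "((C * (3 * t^2 / 3 + x)) * (t\<^sup>2+x) - S * (2 * t)) / (t\<^sup>2+x)\<^sup>2 = (C * d * d - S * (2*t)) / d\<^sup>2"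
    by (simp add: d_def)
  also have "\<dots> = C - S * (2*t/d\<^sup>2)" using d by (simp add: field_simps power2_eq_square)
  finally show ?thesis by (simp add: d_def)
qed

lemma airy_deriv1:
  fixes x t :: real assumes p: "t\<^sup>2 + x \<noteq> 0"
  shows "((\<lambda>t. sin (t^3/3 + x*t) / (t\<^sup>2+x)) has_real_derivative
      (cos (t^3/3 + x*t) - sin (t^3/3 + x*t) * (2*t/(t\<^sup>2+x)\<^sup>2))) (at t)"
proof -
  have "((\<lambda>t. sin (t^3/3 + x*t) / (t\<^sup>2+x)) has_real_derivative
     ((cos (t^3/3 + x*t) * (3 * t^2 / 3 + x)) * (t\<^sup>2+x) - sin (t^3/3 + x*t) * (2 * t)) / (t\<^sup>2+x)\<^sup>2) (at t)"
    using p by (auto intro!: derivative_eq_intros simp: power2_eq_square)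
  thus ?thesis using aux[OF p] by simp
qed

lemma airy_deriv_g:
  fixes x t :: real assumes p: "t\<^sup>2 + x \<noteq> 0"
  shows "((\<lambda>t. - 1 / (t\<^sup>2+x)) has_real_derivative (2*t/(t\<^sup>2+x)\<^sup>2)) (at t)"
proof -
  have "((\<lambda>t. - 1 / (t\<^sup>2+x)) has_real_derivative (- (- (1 * (2 * t)) / (t\<^sup>2+x)\<^sup>2))) (at t)"
    using p by (auto intro!: derivative_eq_intros simp: power2_eq_square)
  thus ?thesis by simp
qed

lemma airy_ftc1:
  fixes x A B :: real
  assumes AB: "A \<le> B" and pos: "\<And>t. t \<in> {A..B} \<Longrightarrow> 0 < t\<^sup>2 + x"
  shows "((\<lambda>t. cos (t^3/3 + x*t) - sin (t^3/3 + x*t) * (2*t/(t\<^sup>2+x)\<^sup>2)) has_integral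
      (sin (B^3/3 + x*B)/(B\<^sup>2+x) - sin (A^3/3 + x*A)/(A\<^sup>2+x))) {A..B}"
proof (rule fundamental_theorem_of_calculus[OF AB])
  fix t assume t: "t \<in> {A..B}"
  have p: "t\<^sup>2 + x \<noteq> 0" using pos[OF t] by simp
  have "((\<lambda>t. sin (t^3/3 + x*t) / (t\<^sup>2+x)) has_real_derivative
      (cos (t^3/3 + x*t) - sin (t^3/3 + x*t) * (2*t/(t\<^sup>2+x)\<^sup>2))) (at t)"
    by (rule airy_deriv1[OF p])
  thus "((\<lambda>t. sin (t^3/3 + x*t) / (t\<^sup>2+x)) has_vector_derivative
      (cos (t^3/3 + x*t) - sin (t^3/3 + x*t) * (2*t/(t\<^sup>2+x)\<^sup>2))) (at t within {A..B})"
    by (simp add: has_real_derivative_iff_has_vector_derivative[symmetric] has_field_derivative_at_within)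
qed

lemma airy_ftc_g:
  fixes x A B :: real
  assumes AB: "A \<le> B" and pos: "\<And>t. t \<in> {A..B} \<Longrightarrow> 0 < t\<^sup>2 + x"
  shows "((\<lambda>t. 2*t/(t\<^sup>2+x)\<^sup>2) has_integral (1/(A\<^sup>2+x) - 1/(B\<^sup>2+x))) {A..B}"
proof -
  have "((\<lambda>t. 2*t/(t\<^sup>2+x)\<^sup>2) has_integral ((- 1/(B\<^sup>2+x)) - (- 1/(A\<^sup>2+x)))) {A..B}"
  proof (rule fundamental_theorem_of_calculus[OF AB])
    fix t assume t: "t \<in> {A..B}"
    have p: "t\<^sup>2 + x \<noteq> 0" using pos[OF t] by simp
    have "((\<lambda>t. - 1 / (t\<^sup>2+x)) has_real_derivative (2*t/(t\<^sup>2+x)\<^sup>2)) (at t)"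
      by (rule airy_deriv_g[OF p])
    thus "((\<lambda>t. - 1 / (t\<^sup>2+x)) has_vector_derivative (2*t/(t\<^sup>2+x)\<^sup>2)) (at t within {A..B})"
      by (simp add: has_real_derivative_iff_has_vector_derivative[symmetric] has_field_derivative_at_within)
  qed
  thus ?thesis by simp
qed

lemma airy_tail_bound:
  fixes x A B :: real
  assumes A0: "0 \<le> A" and AB: "A \<le> B" and posA: "0 < A\<^sup>2 + x"
  shows "\<bar>integral {A..B} (\<lambda>t. cos (t^3/3 + x*t))\<bar> \<le> 2/(A\<^sup>2+x)"
proof -
  have pos: "0 < t\<^sup>2 + x" if "t \<in> {A..B}" for t
  proof -
    have "A\<^sup>2 \<le> t\<^sup>2" using that A0 by (intro power_mono) auto
    thus ?thesis using posA by linarith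
  qed
  have cg: "continuous_on {A..B} (\<lambda>t. sin (t^3/3 + x*t) * (2*t/(t\<^sup>2+x)\<^sup>2))"
  proof -
    have nz: "\<forall>t\<in>{A..B}. (t\<^sup>2+x)\<^sup>2 \<noteq> 0" using pos by (metis less_irrefl power_not_zero)
    show ?thesis by (intro continuous_intros nz) auto
  qed
  have ig: "(\<lambda>t. sin (t^3/3 + x*t) * (2*t/(t\<^sup>2+x)\<^sup>2)) integrable_on {A..B}"
    by (rule integrable_continuous_interval[OF cg])
  have "((\<lambda>t. (cos (t^3/3 + x*t) - sin (t^3/3 + x*t) * (2*t/(t\<^sup>2+x)\<^sup>2)) + sin (t^3/3 + x*t) * (2*t/(t\<^sup>2+x)\<^sup>2))
     has_integral ((sin (B^3/3 + x*B)/(B\<^sup>2+x) - sin (A^3/3 + x*A)/(A\<^sup>2+x)) + integral {A..B} (\<lambda>t. sin (t^3/3 + x*t) * (2*t/(t\<^sup>2+x)\<^sup>2)))) {A..B}"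
    by (rule has_integral_add[OF airy_ftc1[OF AB pos] integrable_integral[OF ig]])
  hence eq: "integral {A..B} (\<lambda>t. cos (t^3/3 + x*t)) = sin (B^3/3 + x*B)/(B\<^sup>2+x) - sin (A^3/3 + x*A)/(A\<^sup>2+x)
      + integral {A..B} (\<lambda>t. sin (t^3/3 + x*t) * (2*t/(t\<^sup>2+x)\<^sup>2))"
    by (simp add: integral_unique)
  have gi: "integral {A..B} (\<lambda>t. 2*t/(t\<^sup>2+x)\<^sup>2) = 1/(A\<^sup>2+x) - 1/(B\<^sup>2+x)"
    by (rule integral_unique[OF airy_ftc_g[OF AB pos]])
  have "\<bar>integral {A..B} (\<lambda>t. sin (t^3/3 + x*t) * (2*t/(t\<^sup>2+x)\<^sup>2))\<bar> \<le> integral {A..B} (\<lambda>t. 2*t/(t\<^sup>2+x)\<^sup>2)"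
  proof -
    have "norm (integral {A..B} (\<lambda>t. sin (t^3/3 + x*t) * (2*t/(t\<^sup>2+x)\<^sup>2))) \<le> integral {A..B} (\<lambda>t. 2*t/(t\<^sup>2+x)\<^sup>2)"
    proof (rule integral_norm_bound_integral[OF ig])
      show "(\<lambda>t. 2*t/(t\<^sup>2+x)\<^sup>2) integrable_on {A..B}" using airy_ftc_g[OF AB pos] by blast
      fix t assume t: "t \<in> {A..B}"
      have t0: "t \<ge> 0" using t A0 by auto
      hence g0: "0 \<le> 2*t/(t\<^sup>2+x)\<^sup>2" by simp
      have "norm (sin (t^3/3 + x*t) * (2*t/(t\<^sup>2+x)\<^sup>2)) = \<bar>sin (t^3/3 + x*t)\<bar> * (2*t/(t\<^sup>2+x)\<^sup>2)"
        using g0 t0 by (simp add: abs_mult)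
      also have "\<dots> \<le> 1 * (2*t/(t\<^sup>2+x)\<^sup>2)" by (rule mult_right_mono[OF abs_sin_le_one g0])
      finally show "norm (sin (t^3/3 + x*t) * (2*t/(t\<^sup>2+x)\<^sup>2)) \<le> 2*t/(t\<^sup>2+x)\<^sup>2" by simp
    qed
    thus ?thesis by simp
  qed
  have pB: "0 < B\<^sup>2 + x" using pos[of B] AB by simp
  have sB: "\<bar>sin (B^3/3 + x*B)/(B\<^sup>2+x)\<bar> \<le> 1/(B\<^sup>2+x)"
    using pB by (simp add: abs_divide divide_right_mono)
  have sA: "\<bar>sin (A^3/3 + x*A)/(A\<^sup>2+x)\<bar> \<le> 1/(A\<^sup>2+x)"
    using posA by (simp add: abs_divide divide_right_mono)
  show ?thesis unfolding eq using sA sB gi \<open>\<bar>integral {A..B} _\<bar> \<le> _\<close> by linarith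
qed

lemma dh:
  fixes x t :: real assumes p: "t\<^sup>2 + x \<noteq> 0"
  shows "((\<lambda>t. 2*t/(t\<^sup>2+x)^3) has_real_derivative (2/(t\<^sup>2+x)^3 - 12*t\<^sup>2/(t\<^sup>2+x)^4)) (at t)"
proof -
  have d1: "((\<lambda>t. t\<^sup>2+x) has_real_derivative 2*t) (at t)"
    by (auto intro!: derivative_eq_intros)
  have d2: "((\<lambda>t. (t\<^sup>2+x)^3) has_real_derivative (of_nat 3 * (2*t * (t\<^sup>2+x)^(3 - Suc 0)))) (at t)"
    by (rule DERIV_power[OF d1])
  have d3: "((\<lambda>t. 2*t) has_real_derivative 2) (at t)"
    by (auto intro!: derivative_eq_intros)
  have "((\<lambda>t. 2*t/(t\<^sup>2+x)^3) has_real_derivative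
     ((2 * (t\<^sup>2+x)^3 - 2*t * (of_nat 3 * (2*t * (t\<^sup>2+x)^(3 - Suc 0)))) / ((t\<^sup>2+x)^3 * (t\<^sup>2+x)^3))) (at t)"
    by (rule DERIV_divide[OF d3 d2]) (use p in simp)
  moreover have "(2 * (t\<^sup>2+x)^3 - 2*t * (of_nat 3 * (2*t * (t\<^sup>2+x)^(3 - Suc 0)))) / ((t\<^sup>2+x)^3 * (t\<^sup>2+x)^3)
     = 2/(t\<^sup>2+x)^3 - 12*t\<^sup>2/(t\<^sup>2+x)^4"
  proof -
    define d where "d = t\<^sup>2 + x"
    have d: "d \<noteq> 0" using p d_def by simp
    show ?thesis unfolding d_def[symmetric] using d by (simp add: field_simps eval_nat_numeral)
  qed
  ultimately show ?thesis by simp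
qed

lemma dF:
  fixes x t :: real assumes p: "t\<^sup>2 + x \<noteq> 0"
  shows "((\<lambda>t. - cos (t^3/3 + x*t) * (2*t/(t\<^sup>2+x)^3)) has_real_derivative
      (sin (t^3/3 + x*t) * (2*t/(t\<^sup>2+x)\<^sup>2) - cos (t^3/3 + x*t) * (2/(t\<^sup>2+x)^3 - 12*t\<^sup>2/(t\<^sup>2+x)^4))) (at t)"
proof -
  have dc: "((\<lambda>t. - cos (t^3/3 + x*t)) has_real_derivative (sin (t^3/3 + x*t) * (t\<^sup>2 + x))) (at t)"
    by (auto intro!: derivative_eq_intros simp: power2_eq_square)
  have "((\<lambda>t. - cos (t^3/3 + x*t) * (2*t/(t\<^sup>2+x)^3)) has_real_derivative
     (- cos (t^3/3 + x*t) * (2/(t\<^sup>2+x)^3 - 12*t\<^sup>2/(t\<^sup>2+x)^4) + sin (t^3/3 + x*t) * (t\<^sup>2 + x) * (2*t/(t\<^sup>2+x)^3))) (at t)"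
    by (rule DERIV_mult'[OF dc dh[OF p]])
  moreover have "sin (t^3/3 + x*t) * (t\<^sup>2 + x) * (2*t/(t\<^sup>2+x)^3) = sin (t^3/3 + x*t) * (2*t/(t\<^sup>2+x)\<^sup>2)"
  proof -
    define d where "d = t\<^sup>2 + x"
    have d: "d \<noteq> 0" using p d_def by simp
    show ?thesis unfolding d_def[symmetric] using d by (simp add: field_simps eval_nat_numeral)
  qed
  ultimately show ?thesis by simp
qed

lemma IA_integrable: "(\<lambda>t::real. cos (t^3/3 + x*t)) integrable_on {a..b}"
  by (intro integrable_continuous_interval continuous_intros) auto

lemma IA_split:
  fixes A B :: real assumes "0 \<le> A" "A \<le> B"
  shows "integral {0..B} (\<lambda>t. cos (t^3/3 + x*t)) = integral {0..A} (\<lambda>t. cos (t^3/3 + x*t)) + integral {A..B} (\<lambda>t. cos (t^3/3 + x*t))"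
  using Henstock_Kurzweil_Integration.integral_combine[OF assms IA_integrable] by simp

lemma IA_head_bound:
  fixes T :: real assumes "0 \<le> T"
  shows "\<bar>integral {0..T} (\<lambda>t. cos (t^3/3 + x*t))\<bar> \<le> T"
proof -
  have "norm (integral {0..T} (\<lambda>t. cos (t^3/3 + x*t))) \<le> 1 * (T - 0)"
    by (rule integral_bound) (use assms in \<open>auto intro!: continuous_intros\<close>)
  thus ?thesis by simp
qed

lemma airy_convergent: "convergent (\<lambda>n::nat. integral {0..real n} (\<lambda>t. cos (t^3/3 + x*t)))"
proof -
  define u where "u = (\<lambda>n::nat. integral {0..real n} (\<lambda>t. cos (t^3/3 + x*t)))"
  have "Cauchy u"
  proof (rule CauchyI)
    fix e :: real assume e: "0 < e"
    obtain M :: nat where M: "\<bar>x\<bar> + 1 + 2/e \<le> real M" using real_arch_simple by blast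
    have M1: "1 \<le> real M" using M e by (smt (verit) divide_pos_pos)
    have "real M \<le> real M ^ 2" using M1 by (simp add: power2_eq_square)
    hence Mx: "2/e < real M ^ 2 + x" using M by linarith
    have Mpos: "0 < real M ^ 2 + x" using Mx e by (smt (verit) divide_pos_pos)
    have key: "\<bar>u n - u m\<bar> < e" if mn: "M \<le> m" "m \<le> n" for m n
    proof -
      have "real M ^ 2 \<le> real m ^ 2" using mn by (simp add: power_mono)
      hence mpos: "0 < real m ^ 2 + x" and mle: "real M ^ 2 + x \<le> real m ^ 2 + x" using Mpos by linarith+
      have "u n - u m = integral {real m..real n} (\<lambda>t. cos (t^3/3 + x*t))"
        unfolding u_def using IA_split[of "real m" "real n" x] mn by simp
      hence "\<bar>u n - u m\<bar> \<le> 2/(real m ^ 2 + x)"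
        using airy_tail_bound[of "real m" "real n" x] mn mpos by simp
      also have "\<dots> \<le> 2/(real M ^ 2 + x)" using mle Mpos by (simp add: frac_le)
      also have "\<dots> < e" using Mx Mpos e by (simp add: divide_less_eq mult.commute pos_divide_less_eq)
      finally show ?thesis .
    qed
    show "\<exists>M. \<forall>m\<ge>M. \<forall>n\<ge>M. norm (u m - u n) < e"
    proof (intro exI allI impI)
      fix m n assume "M \<le> m" "M \<le> n"
      thus "norm (u m - u n) < e"
        using key[of m n] key[of n m] by (cases "m \<le> n") (auto simp: abs_minus_commute)
    qed
  qed
  thus ?thesis unfolding u_def by (rule Cauchy_convergent)
qed

lemma Ai_LIMSEQ: "(\<lambda>n::nat. integral {0..real n} (\<lambda>t. cos (t^3/3 + x*t))) \<longlonglongrightarrow> pi * Ai x"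
proof -
  have "(\<lambda>n::nat. integral {0..real n} (\<lambda>t. cos (t^3/3 + x*t))) \<longlonglongrightarrow> lim (\<lambda>n::nat. integral {0..real n} (\<lambda>t. cos (t^3/3 + x*t)))"
    using airy_convergent convergent_LIMSEQ_iff by blast
  moreover have "lim (\<lambda>n::nat. integral {0..real n} (\<lambda>t. cos (t^3/3 + x*t))) = pi * Ai x"
    unfolding Ai_def by simp
  ultimately show ?thesis by simp
qed

lemma Ai_abs_from_bound:
  assumes "\<And>n::nat. real n \<ge> R0 \<Longrightarrow> \<bar>integral {0..real n} (\<lambda>t. cos (t^3/3 + x*t))\<bar> \<le> B"
  shows "\<bar>pi * Ai x\<bar> \<le> B"
proof (rule LIMSEQ_le_const2)
  show "(\<lambda>n::nat. \<bar>integral {0..real n} (\<lambda>t. cos (t^3/3 + x*t))\<bar>) \<longlonglongrightarrow> \<bar>pi * Ai x\<bar>"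
    by (rule tendsto_rabs[OF Ai_LIMSEQ])
  obtain N :: nat where "R0 \<le> real N" using real_arch_simple by blast
  thus "\<exists>N. \<forall>n\<ge>N. \<bar>integral {0..real n} (\<lambda>t. cos (t^3/3 + x*t))\<bar> \<le> B"
    using assms by (intro exI[of _ N]) (auto intro!: assms order_trans[of _ "real N"])
qed

lemma Ai_bound_all: "\<bar>Ai x\<bar> \<le> \<bar>x\<bar> + 3"
proof -
  define T where "T = \<bar>x\<bar> + 1"
  have T0: "0 \<le> T" by (simp add: T_def)
  have Tx: "1 \<le> T^2 + x"
  proof -
    have "T^2 = x^2 + 2*\<bar>x\<bar> + 1" by (simp add: T_def power2_eq_square algebra_simps)
    thus ?thesis by (smt (verit) zero_le_power2)
  qed
  have "\<bar>pi * Ai x\<bar> \<le> \<bar>x\<bar> + 3"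
  proof (rule Ai_abs_from_bound[of T])
    fix n :: nat assume n: "T \<le> real n"
    have "\<bar>integral {0..real n} (\<lambda>t. cos (t^3/3 + x*t))\<bar>
        \<le> \<bar>integral {0..T} (\<lambda>t. cos (t^3/3 + x*t))\<bar> + \<bar>integral {T..real n} (\<lambda>t. cos (t^3/3 + x*t))\<bar>"
      using IA_split[OF T0 n, of x] by linarith
    also have "\<dots> \<le> T + 2/(T^2 + x)"
      using IA_head_bound[OF T0, of x] airy_tail_bound[OF T0 n, of x] Tx by linarith
    also have "2/(T^2+x) \<le> 2" using Tx by (simp add: divide_le_eq)
    finally show "\<bar>integral {0..real n} (\<lambda>t. cos (t^3/3 + x*t))\<bar> \<le> \<bar>x\<bar> + 3"
      by (simp add: T_def)
  qed
  moreover have "\<bar>Ai x\<bar> \<le> \<bar>pi * Ai x\<bar>"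
  proof -
    have "1 * \<bar>Ai x\<bar> \<le> pi * \<bar>Ai x\<bar>" by (rule mult_right_mono) (use pi_gt3 in auto)
    thus ?thesis by (simp add: abs_mult)
  qed
  ultimately show ?thesis by linarith
qed


lemma hp_bound:
  fixes x t :: real assumes x: "1 \<le> x"
  shows "\<bar>2/(t\<^sup>2+x)^3 - 12*t\<^sup>2/(t\<^sup>2+x)^4\<bar> \<le> 14/x\<^sup>2 * inverse (1+t\<^sup>2)"
proof -
  define d where "d = t\<^sup>2 + x"
  have d1: "1 + t\<^sup>2 \<le> d" and dx: "x \<le> d" using x by (auto simp: d_def)
  have dpos: "0 < d" using d1 by (smt (verit) zero_le_power2)
  have t2: "t\<^sup>2 \<le> d" using x by (simp add: d_def)
  have a: "12*t\<^sup>2/d^4 \<le> 12/d^3"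
  proof -
    have "12*t\<^sup>2/d^4 \<le> 12*d/d^4" using t2 dpos by (intro divide_right_mono) auto
    also have "12*d/d^4 = 12/d^3" using dpos by (simp add: eval_nat_numeral field_simps)
    finally show ?thesis .
  qed
  have b: "0 \<le> 12*t\<^sup>2/d^4" using dpos by simp
  have c: "0 \<le> 2/d^3" using dpos by simp
  have e: "2/d^3 + 12/d^3 = 14/d^3" by (simp add: add_divide_distrib[symmetric])
  have "\<bar>2/d^3 - 12*t\<^sup>2/d^4\<bar> \<le> 14/d^3" unfolding abs_le_iff using a b c e by linarith
  also have "14/d^3 \<le> 14/((1+t\<^sup>2)*x\<^sup>2)"
  proof (rule divide_left_mono)
    have "x\<^sup>2 \<le> d\<^sup>2" using dx x by (intro power_mono) auto
    hence "(1+t\<^sup>2)*x\<^sup>2 \<le> d * d\<^sup>2" using d1 dpos by (intro mult_mono) auto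
    thus "(1+t\<^sup>2)*x\<^sup>2 \<le> d^3" by (simp add: eval_nat_numeral)
    show "0 < d^3 * ((1 + t\<^sup>2) * x\<^sup>2)" using dpos x by (intro mult_pos_pos) (auto simp: add_pos_nonneg)
  qed simp
  also have "\<dots> = 14/x\<^sup>2 * inverse (1+t\<^sup>2)" by (simp add: field_simps)
  finally show ?thesis by (simp add: d_def)
qed

lemma airy_IBP2:
  fixes x R :: real assumes x: "1 \<le> x" and R: "0 \<le> R"
  shows "integral {0..R} (\<lambda>t. cos (t^3/3 + x*t)) = sin (R^3/3 + x*R)/(R\<^sup>2+x) - cos (R^3/3 + x*R) * (2*R/(R\<^sup>2+x)^3)
     + integral {0..R} (\<lambda>t. cos (t^3/3 + x*t) * (2/(t\<^sup>2+x)^3 - 12*t\<^sup>2/(t\<^sup>2+x)^4))"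
proof -
  have pos: "0 < t\<^sup>2 + x" for t using x by (smt (verit) zero_le_power2)
  have nz: "(t\<^sup>2 + x)^k \<noteq> 0" for t k using pos[of t] by simp
  have nz0: "t\<^sup>2 + x \<noteq> 0" for t using pos[of t] by simp
  have i1: "((\<lambda>t. cos (t^3/3 + x*t) - sin (t^3/3 + x*t) * (2*t/(t\<^sup>2+x)\<^sup>2)) has_integral
      (sin (R^3/3 + x*R)/(R\<^sup>2+x) - 0)) {0..R}"
  proof -
    have pos': "\<And>t. t \<in> {0..R} \<Longrightarrow> 0 < t\<^sup>2 + x" using pos by blast
    show ?thesis using airy_ftc1[OF R pos'] by simp
  qed
  have i2: "((\<lambda>t. sin (t^3/3 + x*t) * (2*t/(t\<^sup>2+x)\<^sup>2) - cos (t^3/3 + x*t) * (2/(t\<^sup>2+x)^3 - 12*t\<^sup>2/(t\<^sup>2+x)^4))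
      has_integral (- cos (R^3/3 + x*R) * (2*R/(R\<^sup>2+x)^3) - 0)) {0..R}"
  proof -
    have "((\<lambda>t. sin (t^3/3 + x*t) * (2*t/(t\<^sup>2+x)\<^sup>2) - cos (t^3/3 + x*t) * (2/(t\<^sup>2+x)^3 - 12*t\<^sup>2/(t\<^sup>2+x)^4))
      has_integral ((- cos (R^3/3 + x*R) * (2*R/(R\<^sup>2+x)^3)) - (- cos (0^3/3 + x*0) * (2*0/(0\<^sup>2+x)^3)))) {0..R}"
    proof (rule fundamental_theorem_of_calculus[OF R])
      fix t assume "t \<in> {0..R}"
      have p: "t\<^sup>2 + x \<noteq> 0" using pos[of t] by simp
      show "((\<lambda>t. - cos (t^3/3 + x*t) * (2*t/(t\<^sup>2+x)^3)) has_vector_derivative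
        (sin (t^3/3 + x*t) * (2*t/(t\<^sup>2+x)\<^sup>2) - cos (t^3/3 + x*t) * (2/(t\<^sup>2+x)^3 - 12*t\<^sup>2/(t\<^sup>2+x)^4))) (at t within {0..R})"
        using dF[OF p] by (simp add: has_real_derivative_iff_has_vector_derivative[symmetric] has_field_derivative_at_within)
    qed
    thus ?thesis by simp
  qed
  have c3: "continuous_on {0..R} (\<lambda>t. cos (t^3/3 + x*t) * (2/(t\<^sup>2+x)^3 - 12*t\<^sup>2/(t\<^sup>2+x)^4))"
    by (intro continuous_intros) (auto simp: nz nz0)
  note i3 = integrable_integral[OF integrable_continuous_interval[OF c3]]
  have "((\<lambda>t. ((cos (t^3/3 + x*t) - sin (t^3/3 + x*t) * (2*t/(t\<^sup>2+x)\<^sup>2)) +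
         (sin (t^3/3 + x*t) * (2*t/(t\<^sup>2+x)\<^sup>2) - cos (t^3/3 + x*t) * (2/(t\<^sup>2+x)^3 - 12*t\<^sup>2/(t\<^sup>2+x)^4))) +
         cos (t^3/3 + x*t) * (2/(t\<^sup>2+x)^3 - 12*t\<^sup>2/(t\<^sup>2+x)^4))
     has_integral ((sin (R^3/3 + x*R)/(R\<^sup>2+x) - 0) + (- cos (R^3/3 + x*R) * (2*R/(R\<^sup>2+x)^3) - 0)
        + integral {0..R} (\<lambda>t. cos (t^3/3 + x*t) * (2/(t\<^sup>2+x)^3 - 12*t\<^sup>2/(t\<^sup>2+x)^4)))) {0..R}"
    by (intro has_integral_add i1 i2 i3)
  hence "((\<lambda>t. cos (t^3/3 + x*t)) has_integral (sin (R^3/3 + x*R)/(R\<^sup>2+x) - cos (R^3/3 + x*R) * (2*R/(R\<^sup>2+x)^3)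
     + integral {0..R} (\<lambda>t. cos (t^3/3 + x*t) * (2/(t\<^sup>2+x)^3 - 12*t\<^sup>2/(t\<^sup>2+x)^4)))) {0..R}"
    by simp
  thus ?thesis by (rule integral_unique)
qed

lemma b1_lem:
  fixes x R :: real assumes x: "1 \<le> x" and Rx: "x \<le> R"
  shows "\<bar>sin (R^3/3 + x*R)/(R\<^sup>2+x)\<bar> \<le> 1/x\<^sup>2"
proof -
  have x0: "0 < x" using x by simp
  have pR: "0 < R\<^sup>2 + x" using x by (smt (verit) zero_le_power2)
  have "\<bar>sin (R^3/3 + x*R)/(R\<^sup>2+x)\<bar> = \<bar>sin (R^3/3 + x*R)\<bar>/(R\<^sup>2+x)" using pR by (simp add: abs_divide)
  also have "\<dots> \<le> 1/(R\<^sup>2+x)" using pR by (intro divide_right_mono) auto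
  also have "\<dots> \<le> 1/x\<^sup>2"
  proof (rule divide_left_mono)
    have "x\<^sup>2 \<le> R\<^sup>2" using Rx x by (intro power_mono) auto
    thus "x\<^sup>2 \<le> R\<^sup>2 + x" using x by simp
    show "0 < (R\<^sup>2 + x) * x\<^sup>2" using pR x0 by simp
  qed simp
  finally show ?thesis .
qed

lemma b2_lem:
  fixes x R :: real assumes x: "1 \<le> x" and Rx: "x \<le> R"
  shows "\<bar>cos (R^3/3 + x*R) * (2*R/(R\<^sup>2+x)^3)\<bar> \<le> 2/x\<^sup>2"
proof -
  have x0: "0 < x" using x by simp
  have R1: "1 \<le> R" using x Rx by simp
  have pR: "0 < R\<^sup>2 + x" using x by (smt (verit) zero_le_power2)
  have q0: "0 \<le> 2*R/(R\<^sup>2+x)^3" using pR R1 by simp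
  have "\<bar>cos (R^3/3 + x*R) * (2*R/(R\<^sup>2+x)^3)\<bar> = \<bar>cos (R^3/3 + x*R)\<bar> * (2*R/(R\<^sup>2+x)^3)"
    using q0 by (simp only: abs_mult abs_of_nonneg)
  also have "\<dots> \<le> 1 * (2*R/(R\<^sup>2+x)^3)" by (rule mult_right_mono[OF abs_cos_le_one q0])
  also have "2*R/(R\<^sup>2+x)^3 \<le> 2*R/(R * x\<^sup>2)"
  proof (rule divide_left_mono)
    have "R^2 \<le> R^5" using R1 by (intro power_increasing) auto
    moreover have "x\<^sup>2 \<le> R\<^sup>2" using Rx x by (intro power_mono) auto
    ultimately have "x\<^sup>2 \<le> R^5" by simp
    hence "R * x\<^sup>2 \<le> R * R^5" using R1 by (intro mult_left_mono) auto
    also have "R * R^5 = (R\<^sup>2)^3" by (simp add: eval_nat_numeral)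
    also have "\<dots> \<le> (R\<^sup>2 + x)^3" using x by (intro power_mono) auto
    finally show "R * x\<^sup>2 \<le> (R\<^sup>2+x)^3" .
    show "0 < (R\<^sup>2+x)^3 * (R * x\<^sup>2)" using pR R1 x0 by simp
  qed (use R1 in simp)
  also have "2*R/(R * x\<^sup>2) = 2/x\<^sup>2" using R1 by simp
  finally show ?thesis by simp
qed

lemma ib_lem:
  fixes x R :: real assumes x: "1 \<le> x" and R0: "0 \<le> R"
  shows "\<bar>integral {0..R} (\<lambda>t. cos (t^3/3 + x*t) * (2/(t\<^sup>2+x)^3 - 12*t\<^sup>2/(t\<^sup>2+x)^4))\<bar> \<le> 7*pi/x\<^sup>2"
proof -
  have pos: "0 < t\<^sup>2 + x" for t using x by (smt (verit) zero_le_power2)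
  have nz: "(t\<^sup>2 + x)^k \<noteq> 0" for t k using pos[of t] by simp
  have nz0: "t\<^sup>2 + x \<noteq> 0" for t using pos[of t] by simp
  have arc: "((\<lambda>t. inverse (1 + t\<^sup>2)) has_integral (arctan R - arctan 0)) {0..R}"
  proof (rule fundamental_theorem_of_calculus[OF R0])
    fix t assume "t \<in> {0..R}"
    show "(arctan has_vector_derivative inverse (1 + t\<^sup>2)) (at t within {0..R})"
      using DERIV_arctan[of t] by (simp add: has_real_derivative_iff_has_vector_derivative[symmetric] has_field_derivative_at_within)
  qed
  have arc2: "((\<lambda>t. 14/x\<^sup>2 * inverse (1 + t\<^sup>2)) has_integral (14/x\<^sup>2 * arctan R)) {0..R}"
    using has_integral_mult_right[OF arc, of "14/x\<^sup>2"] by simp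
  have c3: "continuous_on {0..R} (\<lambda>t. cos (t^3/3 + x*t) * (2/(t\<^sup>2+x)^3 - 12*t\<^sup>2/(t\<^sup>2+x)^4))"
    by (intro continuous_intros) (auto simp: nz nz0)
  have "norm (integral {0..R} (\<lambda>t. cos (t^3/3 + x*t) * (2/(t\<^sup>2+x)^3 - 12*t\<^sup>2/(t\<^sup>2+x)^4)))
      \<le> integral {0..R} (\<lambda>t. 14/x\<^sup>2 * inverse (1 + t\<^sup>2))"
  proof (rule integral_norm_bound_integral[OF integrable_continuous_interval[OF c3]])
    show "(\<lambda>t. 14/x\<^sup>2 * inverse (1 + t\<^sup>2)) integrable_on {0..R}" using arc2 by blast
    fix t assume "t \<in> {0..R}"
    have "norm (cos (t^3/3 + x*t) * (2/(t\<^sup>2+x)^3 - 12*t\<^sup>2/(t\<^sup>2+x)^4))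
        = \<bar>cos (t^3/3 + x*t)\<bar> * \<bar>2/(t\<^sup>2+x)^3 - 12*t\<^sup>2/(t\<^sup>2+x)^4\<bar>" by (simp only: real_norm_def abs_mult)
    also have "\<dots> \<le> 1 * \<bar>2/(t\<^sup>2+x)^3 - 12*t\<^sup>2/(t\<^sup>2+x)^4\<bar>" by (rule mult_right_mono) auto
    also have "\<dots> \<le> 14/x\<^sup>2 * inverse (1 + t\<^sup>2)" using hp_bound[OF x, of t] by simp
    finally show "norm (cos (t^3/3 + x*t) * (2/(t\<^sup>2+x)^3 - 12*t\<^sup>2/(t\<^sup>2+x)^4)) \<le> 14/x\<^sup>2 * inverse (1 + t\<^sup>2)" .
  qed
  also have "\<dots> = 14/x\<^sup>2 * arctan R" using arc2 by (rule integral_unique)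
  also have "\<dots> \<le> 14/x\<^sup>2 * (pi/2)" using arctan_ubound[of R] by (intro mult_left_mono) auto
  finally show ?thesis by simp
qed

lemma Ai_bound_pos:
  fixes x :: real assumes x: "1 \<le> x"
  shows "\<bar>Ai x\<bar> \<le> 8 / x\<^sup>2"
proof -
  have x0: "0 < x" using x by simp
  have main: "\<bar>pi * Ai x\<bar> \<le> (3 + 7*pi) / x\<^sup>2"
  proof (rule Ai_abs_from_bound[of x])
    fix n :: nat assume n: "x \<le> real n"
    have R0: "0 \<le> real n" by simp
    have e: "integral {0..real n} (\<lambda>t. cos (t^3/3 + x*t)) = sin (real n^3/3 + x*real n)/((real n)\<^sup>2+x) - cos (real n^3/3 + x*real n) * (2*real n/((real n)\<^sup>2+x)^3)
     + integral {0..real n} (\<lambda>t. cos (t^3/3 + x*t) * (2/(t\<^sup>2+x)^3 - 12*t\<^sup>2/(t\<^sup>2+x)^4))"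
      by (rule airy_IBP2[OF x R0])
    have s: "(3 + 7*pi) / x\<^sup>2 = 1/x\<^sup>2 + 2/x\<^sup>2 + 7*pi/x\<^sup>2" by (simp add: add_divide_distrib)
    show "\<bar>integral {0..real n} (\<lambda>t. cos (t^3/3 + x*t))\<bar> \<le> (3 + 7*pi) / x\<^sup>2"
      unfolding e s using b1_lem[OF x n] b2_lem[OF x n] ib_lem[OF x R0] by linarith
  qed
  have pi0: "0 < pi" by simp
  have "\<bar>Ai x\<bar> * pi \<le> (3 + 7*pi) / x\<^sup>2" using main by (simp add: abs_mult mult.commute)
  hence "\<bar>Ai x\<bar> \<le> (3 + 7*pi) / x\<^sup>2 / pi" by (simp only: pos_le_divide_eq[OF pi0])
  also have "\<dots> = ((3 + 7*pi) / pi) / x\<^sup>2" by simp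
  also have "\<dots> \<le> 8 / x\<^sup>2"
  proof (rule divide_right_mono)
    show "(3 + 7*pi) / pi \<le> 8" using pi_gt3 by (simp add: divide_le_eq)
  qed simp
  finally show ?thesis .
qed

lemma cos_lip: fixes a b :: real shows "\<bar>cos a - cos b\<bar> \<le> \<bar>a - b\<bar>"
proof -
  have "\<bar>cos a - cos b\<bar> = 2 * \<bar>sin ((a + b) / 2)\<bar> * \<bar>sin ((b - a) / 2)\<bar>"
    by (simp add: cos_diff_cos abs_mult)
  also have "\<dots> \<le> 2 * 1 * \<bar>(b - a) / 2\<bar>"
    by (intro mult_mono abs_sin_x_le_abs_x) auto
  finally show ?thesis by simp
qed

lemma IA_lip:
  fixes R :: real assumes R: "0 \<le> R"
  shows "\<bar>integral {0..R} (\<lambda>t. cos (t^3/3 + x*t)) - integral {0..R} (\<lambda>t. cos (t^3/3 + y*t))\<bar> \<le> R * R * \<bar>x - y\<bar>"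
proof -
  have "integral {0..R} (\<lambda>t. cos (t^3/3 + x*t)) - integral {0..R} (\<lambda>t. cos (t^3/3 + y*t))
      = integral {0..R} (\<lambda>t. cos (t^3/3 + x*t) - cos (t^3/3 + y*t))"
    by (rule integral_diff[symmetric]) (rule IA_integrable)+
  also have "norm \<dots> \<le> (R * \<bar>x - y\<bar>) * (R - 0)"
  proof (rule integral_bound[OF R])
    show "continuous_on {0..R} (\<lambda>t. cos (t^3/3 + x*t) - cos (t^3/3 + y*t))"
      by (intro continuous_intros) auto
    fix t assume t: "t \<in> {0..R}"
    have "norm (cos (t^3/3 + x*t) - cos (t^3/3 + y*t)) \<le> \<bar>(t^3/3 + x*t) - (t^3/3 + y*t)\<bar>"
      using cos_lip[of "t^3/3 + x*t" "t^3/3 + y*t"] by simp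
    also have "\<dots> = \<bar>t\<bar> * \<bar>x - y\<bar>" by (simp add: abs_mult[symmetric] algebra_simps)
    also have "\<dots> \<le> R * \<bar>x - y\<bar>" using t by (intro mult_right_mono) auto
    finally show "norm (cos (t^3/3 + x*t) - cos (t^3/3 + y*t)) \<le> R * \<bar>x - y\<bar>" .
  qed
  finally show ?thesis by (simp add: mult_ac)
qed

lemma IA_cont: "continuous_on UNIV (\<lambda>x. integral {0..real n} (\<lambda>t. cos (t^3/3 + x*t)))"
proof (rule lipschitz_on_continuous_on)
  show "(real n * real n)-lipschitz_on UNIV (\<lambda>x. integral {0..real n} (\<lambda>t. cos (t^3/3 + x*t)))"
    by (rule lipschitz_onI) (auto simp: dist_real_def intro: IA_lip)
qed

lemma Ai_measurable[measurable]: "Ai \<in> borel_measurable borel"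
proof -
  have "(\<lambda>x. pi * Ai x) \<in> borel_measurable borel"
    by (rule borel_measurable_LIMSEQ_real[where u="\<lambda>n x. integral {0..real n} (\<lambda>t. cos (t^3/3 + x*t))"])
       (auto intro: Ai_LIMSEQ borel_measurable_continuous_onI IA_cont)
  hence "(\<lambda>x. (pi * Ai x) / pi) \<in> borel_measurable borel" by measurable
  thus ?thesis by simp
qed

lemma Ai_bound_nonneg:
  fixes u :: real assumes u: "0 \<le> u"
  shows "\<bar>Ai u\<bar> \<le> 32 / (1+u)\<^sup>2"
proof (cases "1 \<le> u")
  case True
  have "(1+u)\<^sup>2 \<le> (2*u)\<^sup>2" using True by (intro power_mono) auto
  hence "(1+u)\<^sup>2 \<le> 4 * u\<^sup>2" by (simp add: power_mult_distrib)
  hence "8 / u\<^sup>2 \<le> 32 / (1+u)\<^sup>2" using True by (simp add: frac_le divide_simps)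
  thus ?thesis using Ai_bound_pos[OF True] by linarith
next
  case False
  have "(1+u)\<^sup>2 \<le> 2\<^sup>2" using False u by (intro power_mono) auto
  hence "32 / 4 \<le> 32 / (1+u)\<^sup>2" using u by (intro divide_left_mono) (auto simp: add_pos_nonneg)
  thus ?thesis using Ai_bound_all[of u] False u by simp
qed

definition rho :: "real \<Rightarrow> real" where
  "rho t = (if 0 \<le> t then 1/(1+t) else (1-t)\<^sup>2)"

lemma rho_pos: "0 < rho t" by (auto simp: rho_def)

lemma Ai_bound_shift:
  fixes x t :: real assumes x: "0 \<le> x"
  shows "\<bar>Ai (x + t)\<bar> \<le> 32 * rho t / (1 + x)"
proof (cases "0 \<le> t")
  case True
  have a: "(1+x)*(1+t) \<le> (1+(x+t))\<^sup>2" unfolding power2_eq_square using x True by (intro mult_mono) auto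
  have "\<bar>Ai (x+t)\<bar> \<le> 32 / (1+(x+t))\<^sup>2" using Ai_bound_nonneg[of "x+t"] x True by simp
  also have "\<dots> \<le> 32 / ((1+x)*(1+t))" using a x True by (intro divide_left_mono) (auto simp: add_pos_nonneg)
  also have "\<dots> = 32 * rho t / (1+x)" using True by (simp add: rho_def)
  finally show ?thesis .
next
  case False
  hence t: "t < 0" by simp
  have r: "rho t = (1-t)\<^sup>2" using t by (simp add: rho_def)
  show ?thesis
  proof (cases "0 \<le> x + t")
    case True
    define u where "u = x + t"
    have u0: "0 \<le> u" using True by (simp add: u_def)
    have a: "1 + x \<le> (1+u)*(1-t)"
    proof -
      have "0 \<le> u * (-t)" using u0 t by (intro mult_nonneg_nonneg) auto
      thus ?thesis by (simp add: u_def algebra_simps)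
    qed
    have b: "(1+u) \<le> (1+u)\<^sup>2" using u0 by (simp add: power2_eq_square)
    have c: "(1-t) \<le> (1-t)\<^sup>2" using t by (simp add: power2_eq_square)
    have "\<bar>Ai u\<bar> \<le> 32 / (1+u)\<^sup>2" by (rule Ai_bound_nonneg[OF u0])
    also have "\<dots> \<le> 32 / (1+u)" using b u0 by (intro divide_left_mono) auto
    also have "\<dots> \<le> 32 * (1-t) / (1+x)"
    proof -
      have ne: "1 - t \<noteq> 0" using t by simp
      have "32/(1+u) = 32*(1-t)/((1+u)*(1-t))" using ne by (metis mult_divide_mult_cancel_right)
      also have "\<dots> \<le> 32*(1-t)/(1+x)" by (rule divide_left_mono[OF a]) (use t u0 x in \<open>auto intro!: mult_pos_pos\<close>)
      finally show ?thesis .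
    qed
    also have "\<dots> \<le> 32 * (1-t)\<^sup>2 / (1+x)" using c x by (intro divide_right_mono) auto
    finally show ?thesis by (simp add: u_def r)
  next
    case False
    have "\<bar>Ai (x+t)\<bar> \<le> \<bar>x+t\<bar> + 3" by (rule Ai_bound_all)
    also have "\<dots> \<le> 3 * (1-t)" using False x by simp
    also have "\<dots> \<le> 3 * (1-t)\<^sup>2 / (1+x)"
    proof -
      have "1 + x \<le> 1 - t" using False by simp
      hence "(1-t)*(1+x) \<le> (1-t)*(1-t)" using t by (intro mult_left_mono) auto
      hence m0: "3 * ((1-t) * (1+x)) \<le> 3 * ((1-t) * (1-t))" by simp
      have m: "3 * (1-t) * (1+x) \<le> 3 * (1-t)\<^sup>2" using m0 unfolding power2_eq_square mult.assoc .
      have ne: "1 + x \<noteq> 0" using x by simp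
      have "3 * (1-t) = 3 * (1-t) * (1+x) / (1+x)" using ne by simp
      also have "\<dots> \<le> 3 * (1-t)\<^sup>2 / (1+x)" using m x by (intro divide_right_mono) auto
      finally show ?thesis .
    qed
    also have "\<dots> \<le> 32 * (1-t)\<^sup>2 / (1+x)" using x by (intro divide_right_mono) auto
    finally show ?thesis by (simp add: r)
  qed
qed

lemma sigma_measurable:
  assumes "admissible_sigma \<sigma>"
  shows "\<sigma> \<in> borel_measurable borel"
proof -
  obtain S where S: "finite S" "smooth_off S \<sigma>" using assms unfolding admissible_sigma_def by blast
  obtain D where D: "D 0 = \<sigma>" "\<And>k x. x \<notin> S \<Longrightarrow> (D k has_vector_derivative D (Suc k) x) (at x)"
    using S(2) unfolding smooth_off_def by blast
  have "continuous_on (- S) \<sigma>"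
  proof (rule continuous_at_imp_continuous_on, intro ballI)
    fix x assume "x \<in> - S"
    hence "(\<sigma> has_vector_derivative D 1 x) (at x)" using D(2)[of x 0] D(1) by simp
    thus "isCont \<sigma> x" by (rule has_vector_derivative_continuous)
  qed
  thus ?thesis using S(1) by (intro borel_measurable_continuous_countable_exceptions[of S]) (auto intro: countable_finite)
qed

lemma sigma_bounds:
  assumes "admissible_sigma \<sigma>"
  obtains C c where "0 < c" "0 \<le> C" "\<And>t. norm (\<sigma> t) \<le> 1 + C" "\<And>t. t \<le> 0 \<Longrightarrow> norm (\<sigma> t) \<le> C * exp (c * t)"
proof -
  obtain C c where c: "c > 0" and h1: "\<And>t. t \<le> 0 \<Longrightarrow> norm (\<sigma> t) \<le> C * exp (c * t)"
      and h2: "\<And>t. t \<ge> 0 \<Longrightarrow> norm (\<sigma> t - 1) \<le> C * exp (- c * t)"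
    using assms unfolding admissible_sigma_def by blast
  have "norm (\<sigma> 0) \<le> C" using h1[of 0] by simp
  hence C0: "0 \<le> C" by (meson norm_ge_zero order_trans)
  have bd: "norm (\<sigma> t) \<le> 1 + C" for t
  proof (cases "t \<le> 0")
    case True
    have "exp (c * t) \<le> 1" using True c by (simp add: mult_nonneg_nonpos)
    hence "C * exp (c * t) \<le> C" using C0 by (simp add: mult_left_le)
    thus ?thesis using h1[OF True] by simp
  next
    case False
    have "exp (- c * t) \<le> 1" using False c by simp
    hence "C * exp (- c * t) \<le> C" using C0 by (simp add: mult_left_le)
    moreover have "norm (\<sigma> t) \<le> norm (\<sigma> t - 1) + 1" using norm_triangle_ineq[of "\<sigma> t - 1" 1] by simp
    ultimately show ?thesis using h2[of t] False by simp
  qed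
  show ?thesis by (rule that[OF c C0 bd h1])
qed

lemma inv_sq_integrable: "integrable lborel (\<lambda>x::real. inverse (1 + x^2))"
proof -
  have "set_integrable lborel (einterval (-\<infinity>) \<infinity>) (\<lambda>x. inverse (1 + x^2))"
    by (rule integrable_inverse_1_plus_square)
  moreover have "einterval (-\<infinity>) \<infinity> = (UNIV :: real set)" by (auto simp: einterval_def)
  ultimately show ?thesis by (simp add: set_integrable_def)
qed

lemma exp_poly_bound:
  fixes c y :: real assumes c: "0 < c" and y: "0 \<le> y"
  shows "(1 + y)^6 \<le> exp (c * y) / (min 1 (c/6))^6"
proof -
  define m where "m = min 1 (c/6)"
  have m0: "0 < m" using c by (simp add: m_def)
  have "m * (1 + y) \<le> 1 + c * y / 6"
  proof -
    have "m \<le> 1" "m \<le> c/6" by (auto simp: m_def)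
    hence "m * y \<le> c/6 * y" using y by (intro mult_right_mono) auto
    thus ?thesis using \<open>m \<le> 1\<close> by (simp add: algebra_simps)
  qed
  also have "\<dots> \<le> exp (c * y / 6)" by (rule exp_ge_add_one_self)
  finally have "(m * (1 + y))^6 \<le> (exp (c * y / 6))^6" using m0 y by (intro power_mono) auto
  also have "(exp (c * y / 6))^6 = exp (c * y)" by (simp add: exp_of_nat_mult[symmetric])
  finally have "m^6 * (1 + y)^6 \<le> exp (c * y)" by (simp add: power_mult_distrib)
  thus ?thesis using m0 unfolding m_def[symmetric] by (simp add: field_simps)
qed

lemma restrict_lborel_UNIV: "restrict_space lborel UNIV = (lborel :: real measure)"
  by (rule measure_eqI) (auto simp: emeasure_restrict_space)

lemma airy_kernel_shift:
  fixes s t t' :: real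
  shows "(\<integral>x. Ai (x + t - s) * Ai (x + t' - s) \<partial>restrict_space lborel {s<..}) = airy_kernel t t'"
proof -
  define F where "F = (\<lambda>w. Ai (t + w) * Ai (t' + w))"
  have [measurable]: "F \<in> borel_measurable borel" unfolding F_def by measurable
  have "(\<integral>x. Ai (x + t - s) * Ai (x + t' - s) \<partial>restrict_space lborel {s<..})
      = (\<integral>x. indicator {s<..} x *\<^sub>R F (x - s) \<partial>lborel)"
    by (subst integral_restrict_space) (auto simp: F_def algebra_simps)
  also have "\<dots> = (\<integral>w. indicator {s<..} (s + 1 * w) *\<^sub>R F ((s + 1 * w) - s) \<partial>lborel)"
    using lborel_integral_real_affine[of 1 "\<lambda>x. indicator {s<..} x *\<^sub>R F (x - s)" s] by simp
  also have "\<dots> = (\<integral>w. indicator {0..} w *\<^sub>R F w \<partial>lborel)"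
  proof (rule integral_cong_AE)
    show "AE w in lborel. indicator {s<..} (s + 1 * w) *\<^sub>R F ((s + 1 * w) - s) = indicator {0..} w *\<^sub>R F w"
      using AE_lborel_singleton[of "0::real"] by eventually_elim (auto split: split_indicator)
  qed measurable
  also have "\<dots> = airy_kernel t t'"
    unfolding airy_kernel_def by (subst integral_restrict_space) (auto simp: F_def)
  finally show ?thesis .
qed

theorem proposition36:
  fixes \<sigma> r :: "real \<Rightarrow> complex" and s :: real
  assumes "admissible_sigma \<sigma>"
    and "\<And>t. (r t)\<^sup>2 = \<sigma> t"
  shows "fredholm_det {s<..}
           (\<lambda>x y. LINT t | lborel. \<sigma> t * complex_of_real (Ai (x + t) * Ai (y + t)))
       = fredholm_det UNIV
           (\<lambda>x y. r (x - s) * complex_of_real (airy_kernel x y) * r (y - s))"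
proof -
  obtain C c where c: "0 < c" and C0: "0 \<le> C" and bd: "\<And>t. norm (\<sigma> t) \<le> 1 + C"
      and ex: "\<And>t. t \<le> 0 \<Longrightarrow> norm (\<sigma> t) \<le> C * exp (c * t)"
    using sigma_bounds[OF assms(1)] by blast
  note \<sigma>m[measurable] = sigma_measurable[OF assms(1)]
  define E where "E = (1 + C) * exp (c * \<bar>s\<bar>)"
  have exs: "norm (\<sigma> (t - s)) \<le> E * exp (c * t)" for t
  proof (cases "t - s \<le> 0")
    case True
    have "norm (\<sigma> (t - s)) \<le> C * exp (c * (t - s))" by (rule ex[OF True])
    also have "exp (c * (t - s)) = exp (c * t) * exp (- (c * s))" by (simp add: algebra_simps exp_diff exp_minus field_simps)
    also have "exp (- (c * s)) \<le> exp (c * \<bar>s\<bar>)" using c by (auto simp: abs_if)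
    hence "C * (exp (c * t) * exp (- (c * s))) \<le> (1 + C) * (exp (c * t) * exp (c * \<bar>s\<bar>))"
      using C0 by (intro mult_mono) auto
    finally show ?thesis by (simp add: E_def mult_ac)
  next
    case False
    have "0 \<le> c * \<bar>s\<bar> + c * t"
    proof -
      have "-\<bar>s\<bar> \<le> t" using False by linarith
      hence "c * (-\<bar>s\<bar>) \<le> c * t" using c by (intro mult_left_mono) auto
      thus ?thesis by simp
    qed
    hence "1 \<le> exp (c * \<bar>s\<bar>) * exp (c * t)" by (simp add: exp_add[symmetric])
    hence "1 + C \<le> (1 + C) * (exp (c * \<bar>s\<bar>) * exp (c * t))" using C0 by (simp add: mult_le_cancel_left1)
    thus ?thesis using bd[of "t - s"] by (simp add: E_def mult_ac)
  qed
  have E0: "0 \<le> E" using C0 by (simp add: E_def)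
  define sq where "sq = (\<lambda>y. complex_of_real (sqrt (norm (\<sigma> y))))"
  define cc where "cc = (\<lambda>y. \<sigma> y / sq y)"
  have cs: "cc y * sq y = \<sigma> y" for y
    by (cases "\<sigma> y = 0") (auto simp: cc_def sq_def)
  have sc: "sq y * cc y = \<sigma> y" for y using cs[of y] by (simp add: mult.commute)
  have nsq: "norm (sq y) = sqrt (norm (\<sigma> y))" for y by (simp add: sq_def)
  have ncc: "norm (cc y) = sqrt (norm (\<sigma> y))" for y
    by (simp add: cc_def norm_divide nsq real_div_sqrt)
  define a where "a = (\<lambda>x t. cc (t - s) * complex_of_real (Ai (x + t - s)))"
  define b where "b = (\<lambda>x t. sq (t - s) * complex_of_real (Ai (x + t - s)))"
  define p where "p = (\<lambda>x. 1 / (1 + \<bar>x - s\<bar>))"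
  define q where "q = (\<lambda>t. 32 * sqrt (norm (\<sigma> (t - s))) * rho t)"
  define MX where "MX = restrict_space lborel {s<..}"
  have spX: "space MX = {s<..}" by (simp add: MX_def)
  have sfX: "sigma_finite_measure MX" unfolding MX_def
    by (rule sigma_finite_measure_restrict_space) (auto intro: lborel.sigma_finite_measure_axioms)
  have sfT: "sigma_finite_measure (lborel :: real measure)" by (rule lborel.sigma_finite_measure_axioms)
  have Aib: "\<bar>Ai (x + t - s)\<bar> \<le> p x * (32 * rho t)" if "x \<in> space MX" for x t
  proof -
    have xs: "0 \<le> x - s" using that spX by simp
    have "\<bar>Ai (x + t - s)\<bar> \<le> 32 * rho t / (1 + (x - s))"
      using Ai_bound_shift[OF xs, of t] by (simp add: algebra_simps)
    thus ?thesis using xs by (simp add: p_def)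
  qed
  have ba: "norm (a x t) \<le> p x * q t" if "x \<in> space MX" "t \<in> space lborel" for x t
  proof -
    have "norm (a x t) = sqrt (norm (\<sigma> (t - s))) * \<bar>Ai (x + t - s)\<bar>" by (simp add: a_def norm_mult ncc)
    also have "\<dots> \<le> sqrt (norm (\<sigma> (t - s))) * (p x * (32 * rho t))"
      by (intro mult_left_mono Aib that) auto
    finally show ?thesis by (simp add: q_def mult_ac)
  qed
  have bb: "norm (b x t) \<le> p x * q t" if "x \<in> space MX" "t \<in> space lborel" for x t
  proof -
    have "norm (b x t) = sqrt (norm (\<sigma> (t - s))) * \<bar>Ai (x + t - s)\<bar>" by (simp add: b_def norm_mult nsq)
    also have "\<dots> \<le> sqrt (norm (\<sigma> (t - s))) * (p x * (32 * rho t))"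
      by (intro mult_left_mono Aib that) auto
    finally show ?thesis by (simp add: q_def mult_ac)
  qed
  have idm: "(\<lambda>z. (fst z, snd z)) \<in> measurable (MX \<Otimes>\<^sub>M lborel) (lborel \<Otimes>\<^sub>M (lborel :: real measure))"
  proof -
    have m1: "(\<lambda>z. fst z) \<in> measurable (MX \<Otimes>\<^sub>M lborel) (lborel :: real measure)"
      unfolding MX_def
      by (rule measurable_compose[OF measurable_fst measurable_restrict_space1]) (rule measurable_ident_sets, simp)
    show ?thesis by (rule measurable_Pair[OF m1 measurable_snd])
  qed
  have ma0: "(\<lambda>z. a (fst z) (snd z)) \<in> borel_measurable (lborel \<Otimes>\<^sub>M lborel)"
    unfolding a_def cc_def sq_def by measurable
  have mb0: "(\<lambda>z. b (fst z) (snd z)) \<in> borel_measurable (lborel \<Otimes>\<^sub>M lborel)"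
    unfolding b_def sq_def by measurable
  have ma: "(\<lambda>z. a (fst z) (snd z)) \<in> borel_measurable (MX \<Otimes>\<^sub>M lborel)"
    using measurable_compose[OF idm ma0] by simp
  have mb: "(\<lambda>z. b (fst z) (snd z)) \<in> borel_measurable (MX \<Otimes>\<^sub>M lborel)"
    using measurable_compose[OF idm mb0] by simp
  have ip: "integrable MX (\<lambda>x. (p x)^2)"
  proof -
    have i1: "integrable lborel (\<lambda>x. inverse (1 + (-s + 1 * x)^2))"
      using lborel_integrable_real_affine[OF inv_sq_integrable, of 1 "-s"] by simp
    have i2: "integrable lborel (\<lambda>x. (p x)^2)"
    proof (rule Bochner_Integration.integrable_bound[OF i1])
      show "(\<lambda>x. (p x)^2) \<in> borel_measurable lborel" unfolding p_def by measurable
      show "AE x in lborel. norm ((p x)^2) \<le> norm (inverse (1 + (-s + 1 * x)^2))"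
      proof (rule AE_I2)
        fix x :: real
        have "1 + (x - s)^2 \<le> (1 + \<bar>x - s\<bar>)^2" by (simp add: power2_eq_square algebra_simps)
        hence "1 / (1 + \<bar>x - s\<bar>)^2 \<le> 1 / (1 + (x - s)^2)"
          by (intro divide_left_mono) (auto simp: add_pos_nonneg)
        thus "norm ((p x)^2) \<le> norm (inverse (1 + (-s + 1 * x)^2))"
          by (simp add: p_def power_divide divide_inverse algebra_simps power_inverse)
      qed
    qed
    have "integrable lborel (\<lambda>x. indicator {s<..} x *\<^sub>R (p x)^2)"
      by (rule integrable_mult_indicator) (auto intro: i2)
    thus ?thesis unfolding MX_def by (subst integrable_restrict_space) auto
  qed
  have iq: "integrable lborel (\<lambda>t. (q t)^2)"
  proof -
    define m where "m = min 1 (c/6)"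
    have m0: "0 < m" using c by (simp add: m_def)
    define K where "K = 1024 * (1 + C + E / m^6)"
    have i1: "integrable lborel (\<lambda>t. K * inverse (1 + t^2))"
      using inv_sq_integrable by simp
    show ?thesis
    proof (rule Bochner_Integration.integrable_bound[OF i1])
      show "(\<lambda>t. (q t)^2) \<in> borel_measurable lborel" unfolding q_def rho_def by measurable
      show "AE t in lborel. norm ((q t)^2) \<le> norm (K * inverse (1 + t^2))"
      proof (rule AE_I2)
        fix t :: real
        have qq: "(q t)^2 = 1024 * (norm (\<sigma> (t - s)) * (rho t)^2)"
          by (simp add: q_def power_mult_distrib)
        have key: "norm (\<sigma> (t - s)) * (rho t)^2 \<le> (1 + C + E / m^6) * inverse (1 + t^2)"
        proof (cases "0 \<le> t")
          case True
          have "(rho t)^2 = inverse ((1 + t)^2)" using True by (simp add: rho_def power_divide divide_inverse power_inverse)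
          also have "\<dots> \<le> inverse (1 + t^2)"
            using True by (intro le_imp_inverse_le) (auto simp: power2_eq_square algebra_simps add_pos_nonneg)
          finally have r: "(rho t)^2 \<le> inverse (1 + t^2)" .
          have "norm (\<sigma> (t - s)) * (rho t)^2 \<le> (1 + C) * inverse (1 + t^2)"
            by (intro mult_mono bd r) (use C0 in auto)
          also have "\<dots> \<le> (1 + C + E / m^6) * inverse (1 + t^2)"
            using E0 m0 by (intro mult_right_mono) auto
          finally show ?thesis .
        next
          case False
          have r: "(rho t)^2 = (1 - t)^4" using False by (simp add: rho_def)
          have y: "0 \<le> -t" using False by simp
          have p6: "(1 + (-t))^6 \<le> exp (c * (-t)) / m^6" using exp_poly_bound[OF c y] by (simp add: m_def)
          have h1: "1 + t^2 \<le> (1 - t)^2" using False by (simp add: power2_eq_square algebra_simps)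
          have "(1 - t)^4 * (1 + t^2) \<le> (1 - t)^4 * (1 - t)^2"
            using h1 by (intro mult_left_mono) auto
          also have "\<dots> = (1 + (-t))^6" by (simp add: power_add[symmetric])
          finally have h2: "(1 - t)^4 * (1 + t^2) \<le> exp (c * (-t)) / m^6" using p6 by linarith
          have "norm (\<sigma> (t - s)) * (rho t)^2 \<le> E * exp (c * t) * (1 - t)^4"
            unfolding r by (intro mult_right_mono exs) auto
          also have "\<dots> \<le> E * exp (c * t) * (exp (c * (-t)) / m^6 * inverse (1 + t^2))"
          proof -
            have d: "0 < 1 + t^2" by (simp add: add_pos_nonneg)
            have "(1 - t)^4 \<le> exp (c * (-t)) / m^6 / (1 + t^2)"
              using h2 by (simp only: pos_le_divide_eq[OF d])
            hence "(1 - t)^4 \<le> exp (c * (-t)) / m^6 * inverse (1 + t^2)" by (simp only: divide_inverse)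
            thus ?thesis using E0 by (intro mult_left_mono) auto
          qed
          also have "\<dots> = E * (exp (c * t) * exp (c * (-t))) / m^6 * inverse (1 + t^2)"
            by (simp add: field_simps)
          also have "exp (c * t) * exp (c * (-t)) = 1" by (simp add: exp_add[symmetric])
          also have "E * 1 / m^6 * inverse (1 + t^2) = E / m^6 * inverse (1 + t^2)" by simp
          also have "\<dots> \<le> (1 + C + E / m^6) * inverse (1 + t^2)"
            using C0 by (intro mult_right_mono) auto
          finally show ?thesis .
        qed
        have "norm ((q t)^2) = (q t)^2" by simp
        also have "\<dots> \<le> K * inverse (1 + t^2)"
        proof -
          have "1024 * (norm (\<sigma> (t - s)) * (rho t)^2) \<le> 1024 * ((1 + C + E / m^6) * inverse (1 + t^2))"
            using key by (rule mult_left_mono) simp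
          thus ?thesis unfolding qq K_def by (simp only: mult.assoc)
        qed
        also have "\<dots> \<le> norm (K * inverse (1 + t^2))" by simp
        finally show "norm ((q t)^2) \<le> norm (K * inverse (1 + t^2))" .
      qed
    qed
  qed
  note swap = fred_swap[OF sfX sfT ma mb ba bb ip iq]
  have K1: "(\<lambda>x y. \<integral>t. a x t * b y t \<partial>lborel) = (\<lambda>x y. LINT t | lborel. \<sigma> t * complex_of_real (Ai (x + t) * Ai (y + t)))"
  proof (intro ext)
    fix x y :: real
    have "(LINT t | lborel. \<sigma> t * complex_of_real (Ai (x + t) * Ai (y + t)))
        = (LINT t | lborel. \<sigma> (-s + 1 * t) * complex_of_real (Ai (x + (-s + 1 * t)) * Ai (y + (-s + 1 * t))))"
      using lborel_integral_real_affine[of 1 "\<lambda>t. \<sigma> t * complex_of_real (Ai (x + t) * Ai (y + t))" "-s"] by simp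
    also have "\<dots> = (\<integral>t. a x t * b y t \<partial>lborel)"
      by (rule Bochner_Integration.integral_cong) (auto simp: a_def b_def cs[symmetric] algebra_simps)
    finally show "(\<integral>t. a x t * b y t \<partial>lborel) = (LINT t | lborel. \<sigma> t * complex_of_real (Ai (x + t) * Ai (y + t)))" ..
  qed
  have K2: "(\<lambda>t t'. \<integral>x. b x t * a x t' \<partial>MX) = (\<lambda>t t'. sq (t - s) * complex_of_real (airy_kernel t t') * cc (t' - s))"
  proof (intro ext)
    fix t t' :: real
    have "(\<integral>x. b x t * a x t' \<partial>MX) = (\<integral>x. (sq (t - s) * cc (t' - s)) * complex_of_real (Ai (x + t - s) * Ai (x + t' - s)) \<partial>MX)"
      by (rule Bochner_Integration.integral_cong) (auto simp: a_def b_def mult_ac)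
    also have "\<dots> = sq (t - s) * cc (t' - s) * complex_of_real (\<integral>x. Ai (x + t - s) * Ai (x + t' - s) \<partial>MX)"
      by (simp only: integral_mult_right_zero integral_complex_of_real)
    also have "\<dots> = sq (t - s) * complex_of_real (airy_kernel t t') * cc (t' - s)"
      unfolding MX_def airy_kernel_shift by (simp add: mult_ac)
    finally show "(\<integral>x. b x t * a x t' \<partial>MX) = sq (t - s) * complex_of_real (airy_kernel t t') * cc (t' - s)" .
  qed
  have kd: "kernel_det n (\<lambda>t t'. sq (t - s) * complex_of_real (airy_kernel t t') * cc (t' - s)) z
      = kernel_det n (\<lambda>x y. r (x - s) * complex_of_real (airy_kernel x y) * r (y - s)) z" for n z
  proof -
    have "kernel_det n (\<lambda>t t'. sq (t - s) * complex_of_real (airy_kernel t t') * cc (t' - s)) z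
       = (\<Prod>i<n. sq (z i - s) * cc (z i - s)) * kernel_det n (\<lambda>x y. complex_of_real (airy_kernel x y)) z"
      by (rule kernel_det_scale)
    also have "(\<Prod>i<n. sq (z i - s) * cc (z i - s)) = (\<Prod>i<n. r (z i - s) * r (z i - s))"
      using assms(2) by (intro prod.cong refl) (simp add: sc power2_eq_square)
    also have "(\<Prod>i<n. r (z i - s) * r (z i - s)) * kernel_det n (\<lambda>x y. complex_of_real (airy_kernel x y)) z
       = kernel_det n (\<lambda>x y. r (x - s) * complex_of_real (airy_kernel x y) * r (y - s)) z"
      by (rule kernel_det_scale[symmetric])
    finally show ?thesis .
  qed
  have termeq: "integral\<^sup>L (PiM {..<n} (\<lambda>_. restrict_space lborel {s<..}))
        (kernel_det n (\<lambda>x y. LINT t | lborel. \<sigma> t * complex_of_real (Ai (x + t) * Ai (y + t))))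
      = integral\<^sup>L (PiM {..<n} (\<lambda>_. restrict_space lborel UNIV))
        (kernel_det n (\<lambda>x y. r (x - s) * complex_of_real (airy_kernel x y) * r (y - s)))" for n
  proof -
    have "integral\<^sup>L (PiM {..<n} (\<lambda>_. restrict_space lborel {s<..}))
        (kernel_det n (\<lambda>x y. LINT t | lborel. \<sigma> t * complex_of_real (Ai (x + t) * Ai (y + t))))
      = integral\<^sup>L (PiM {..<n} (\<lambda>_. lborel)) (kernel_det n (\<lambda>t t'. \<integral>x. b x t * a x t' \<partial>MX))"
      using swap[of n] unfolding K1 MX_def by simp
    also have "\<dots> = integral\<^sup>L (PiM {..<n} (\<lambda>_. lborel)) (kernel_det n (\<lambda>x y. r (x - s) * complex_of_real (airy_kernel x y) * r (y - s)))"
      unfolding K2 by (rule Bochner_Integration.integral_cong) (simp_all add: kd)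
    finally show ?thesis by (simp add: restrict_lborel_UNIV)
  qed
  show ?thesis unfolding fredholm_det_def termeq ..
qed

end
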